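(* Let $k\ge0$ be an integer and let $\alpha,\beta,v$ be real with $\alpha>-(k+1)$, $\beta>-(k+1)$ and $|\alpha-\beta|<|v|<\alpha+\beta+2(k+1)$. Then $W^{(k)}=W^{(\alpha+k,\beta+k,v)}$ is an irreducible weight matrix on $(0,1)$, and the differential operator $D^{(k)}$ is symmetric with respect to $W^{(k)}$.
   Context: For real parameters $a,b,v$ write $\kappa'_{\pm v,\pm b}=a\pm v\pm b$ and define $$W^{(a,b,v)}(t)=t^a(1-t)^b\begin{pmatrix}\frac{v(\kappa'_{v,b}+2)}{\kappa'_{v,-b}}t^2-(\kappa'_{v,b}+2)t+(a+1) & (a+b+2)t-(a+1)\\ (a+b+2)t-(a+1) & -\frac{v(\kappa'_{-v,b}+2)}{\kappa'_{-v,-b}}t^2-(\kappa'_{-v,b}+2)t+(a+1)\end{pmatrix},\quad t\in(0,1).$$ Put $W^{(k)}=W^{(\alpha+k,\beta+k,v)}$. With $\kappa_{\pm v,\pm\beta}=\alpha\pm v\pm\beta$, let $C=\begin{pmatrix}\alpha+1-\frac{\kappa_{-v,-\beta}}{v}&\frac{\kappa_{v,-\beta}}{v}\\-\frac{\kappa_{-v,-\beta}}{v}&\alpha+1+\frac{\kappa_{v,-\beta}}{v}\end{pmatrix}$, $V=\mathrm{diag}(v,0)$, $C^{(k)}=C+kI$, $U^{(k)}=(\alpha+\beta+4+2k)I$, and let $D^{(k)}$ be the right-acting operator $PD^{(k)}=P''(t)\,t(1-t)+P'(t)\big((C^{(k)})^*-tU^{(k)}\big)-P(t)V$. A weight matrix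 is a $2\times2$ matrix function positive definite a.e. on $(0,1)$ with finite moments. It is irreducible if there is no constant non-singular $M$ with $MW(t)M^*$ diagonal for all $t$. An operator $D$ is symmetric w.r.t. $W$ if $\langle PD,Q\rangle=\langle P,QD\rangle$ for all $2\times2$ matrix polynomials $P,Q$, where $\langle P,Q\rangle=\int_0^1P W Q^*dt$. *)

theory Defs
  imports "HOL-Analysis.Analysis"
begin

text \<open>2x2 matrices are rendered as complex^2^2 (indices 1, 2 of the numeral type 2).
  Matrix product is (**), conjugate transpose is mstar.\<close>

definition mat2 :: "'a::zero \<Rightarrow> 'a \<Rightarrow> 'a \<Rightarrow> 'a \<Rightarrow> 'a^2^2" where
  "mat2 a b c d = vector [vector [a, b], vector [c, d]]"

definition mstar :: "complex^2^2 \<Rightarrow> complex^2^2" where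
  "mstar M = (\<chi> i j. cnj (M $ j $ i))"

definition cmat :: "real^2^2 \<Rightarrow> complex^2^2" where
  "cmat A = (\<chi> i j. complex_of_real (A $ i $ j))"

definition pos_def :: "complex^2^2 \<Rightarrow> bool" where
  "pos_def M \<longleftrightarrow> mstar M = M \<and>
     (\<forall>x::complex^2. x \<noteq> 0 \<longrightarrow> 0 < Re (\<Sum>i\<in>UNIV. cnj (x $ i) * (M *v x) $ i))"

definition weight_matrix :: "(real \<Rightarrow> complex^2^2) \<Rightarrow> bool" where
  "weight_matrix W \<longleftrightarrow>
     (AE t in lebesgue. t \<in> {0<..<1} \<longrightarrow> pos_def (W t)) \<and>
     (\<forall>n::nat. (\<lambda>t. (t ^ n) *\<^sub>R W t) absolutely_integrable_on {0<..<1})"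

definition is_diag :: "complex^2^2 \<Rightarrow> bool" where
  "is_diag A \<longleftrightarrow> (\<forall>i j. i \<noteq> j \<longrightarrow> A $ i $ j = 0)"

definition irreducible_weight :: "(real \<Rightarrow> complex^2^2) \<Rightarrow> bool" where
  "irreducible_weight W \<longleftrightarrow>
     \<not> (\<exists>M::complex^2^2. invertible M \<and> (\<forall>t\<in>{0<..<1}. is_diag (M ** W t ** mstar M)))"

definition matpoly :: "(real \<Rightarrow> complex^2^2) \<Rightarrow> bool" where
  "matpoly P \<longleftrightarrow> (\<exists>(c::nat \<Rightarrow> complex^2^2) n. \<forall>t. P t = (\<Sum>i\<le>n. (t ^ i) *\<^sub>R c i))"

definition mip :: "(real \<Rightarrow> complex^2^2) \<Rightarrow> (real \<Rightarrow> complex^2^2) \<Rightarrow> (real \<Rightarrow> complex^2^2) \<Rightarrow> complex^2^2" where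
  "mip W P Q = integral {0<..<1} (\<lambda>t. P t ** W t ** mstar (Q t))"

definition symmetric_op :: "((real \<Rightarrow> complex^2^2) \<Rightarrow> (real \<Rightarrow> complex^2^2)) \<Rightarrow> (real \<Rightarrow> complex^2^2) \<Rightarrow> bool" where
  "symmetric_op D W \<longleftrightarrow> (\<forall>P Q. matpoly P \<longrightarrow> matpoly Q \<longrightarrow> mip W (D P) Q = mip W P (D Q))"

definition Wabv :: "real \<Rightarrow> real \<Rightarrow> real \<Rightarrow> real \<Rightarrow> complex^2^2" where
  "Wabv a b v t = cmat ((t powr a * (1 - t) powr b) *\<^sub>R mat2
     (v * ((a + v + b) + 2) / (a + v - b) * t^2 - ((a + v + b) + 2) * t + (a + 1))
     ((a + b + 2) * t - (a + 1))
     ((a + b + 2) * t - (a + 1))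
     (- v * ((a - v + b) + 2) / (a - v - b) * t^2 - ((a - v + b) + 2) * t + (a + 1)))"

definition Wk :: "real \<Rightarrow> real \<Rightarrow> real \<Rightarrow> nat \<Rightarrow> real \<Rightarrow> complex^2^2" where
  "Wk \<alpha> \<beta> v k = Wabv (\<alpha> + real k) (\<beta> + real k) v"

definition Cmat :: "real \<Rightarrow> real \<Rightarrow> real \<Rightarrow> real^2^2" where
  "Cmat \<alpha> \<beta> v = mat2
     (\<alpha> + 1 - (\<alpha> - v - \<beta>) / v) ((\<alpha> + v - \<beta>) / v)
     (- (\<alpha> - v - \<beta>) / v) (\<alpha> + 1 + (\<alpha> + v - \<beta>) / v)"

definition Vmat :: "real \<Rightarrow> real^2^2" where
  "Vmat v = mat2 v 0 0 0"

definition Ck :: "real \<Rightarrow> real \<Rightarrow> real \<Rightarrow> nat \<Rightarrow> real^2^2" where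
  "Ck \<alpha> \<beta> v k = Cmat \<alpha> \<beta> v + real k *\<^sub>R mat 1"

definition Uk :: "real \<Rightarrow> real \<Rightarrow> nat \<Rightarrow> real^2^2" where
  "Uk \<alpha> \<beta> k = (\<alpha> + \<beta> + 4 + 2 * real k) *\<^sub>R mat 1"

definition Dk :: "real \<Rightarrow> real \<Rightarrow> real \<Rightarrow> nat \<Rightarrow> (real \<Rightarrow> complex^2^2) \<Rightarrow> (real \<Rightarrow> complex^2^2)" where
  "Dk \<alpha> \<beta> v k P = (\<lambda>t.
     let P1 = (\<lambda>s. vector_derivative P (at s));
         P2 = (\<lambda>s. vector_derivative P1 (at s))
     in (t * (1 - t)) *\<^sub>R P2 t
        + P1 t ** (mstar (cmat (Ck \<alpha> \<beta> v k)) - t *\<^sub>R cmat (Uk \<alpha> \<beta> k))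
        - P t ** cmat (Vmat v))"

end

theory Submission
  imports Defs
begin


lemma mat2_nth[simp]: "mat2 a b c d $ 1 $ 1 = a" "mat2 a b c d $ 1 $ 2 = b"
  "mat2 a b c d $ 2 $ 1 = c" "mat2 a b c d $ 2 $ 2 = d"
  by (simp_all add: mat2_def)

lemma cmat_nth[simp]: "cmat A $ i $ j = complex_of_real (A $ i $ j)"
  by (simp add: cmat_def)

lemma mstar_nth[simp]: "mstar A $ i $ j = cnj (A $ j $ i)"
  by (simp add: mstar_def)

lemma mat22_eq_iff: "(A::'a^2^2) = B \<longleftrightarrow> A$1$1 = B$1$1 \<and> A$1$2 = B$1$2 \<and> A$2$1 = B$2$1 \<and> A$2$2 = B$2$2"
  by (auto simp: vec_eq_iff forall_2)

lemma mmult_nth[simp]: "((A::'a::semiring_1^2^2) ** B) $ i $ j = A$i$1 * B$1$j + A$i$2 * B$2$j"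
  by (simp add: matrix_matrix_mult_def sum_2)

lemma mat1_nth[simp]: "(mat 1 :: 'a::zero_neq_one^2^2) $ 1 $ 1 = 1" "(mat 1 :: 'a::zero_neq_one^2^2) $ 2 $ 2 = 1"
  "(mat 1 :: 'a::zero_neq_one^2^2) $ 1 $ 2 = 0" "(mat 1 :: 'a::zero_neq_one^2^2) $ 2 $ 1 = 0"
  by (simp_all add: mat_def)



definition Wp :: "real \<Rightarrow> real \<Rightarrow> real \<Rightarrow> real \<Rightarrow> real^2^2" where
  "Wp a b v t = mat2
     (v * ((a + v + b) + 2) / (a + v - b) * t^2 - ((a + v + b) + 2) * t + (a + 1))
     ((a + b + 2) * t - (a + 1))
     ((a + b + 2) * t - (a + 1))
     (- v * ((a - v + b) + 2) / (a - v - b) * t^2 - ((a - v + b) + 2) * t + (a + 1))"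

lemma Wabv_eq: "Wabv a b v t = cmat ((t powr a * (1-t) powr b) *\<^sub>R Wp a b v t)"
  by (simp add: Wabv_def Wp_def)

locale parms =
  fixes a b v :: real
  assumes ha: "a > -1" and hb: "b > -1" and hv1: "\<bar>a - b\<bar> < \<bar>v\<bar>" and hv2: "\<bar>v\<bar> < a + b + 2"
begin

lemma nz: "a + v - b \<noteq> 0" "a - v - b \<noteq> 0" "v \<noteq> 0"
  using hv1 by auto

lemma c1_pos: "v * ((a + v + b) + 2) / (a + v - b) > 0"
proof (cases "v > 0")
  case True
  then show ?thesis using hv1 hv2 by (intro divide_pos_pos mult_pos_pos) auto
next
  case False
  then have "v < 0" using nz by auto
  then show ?thesis using hv1 hv2 by (intro divide_neg_neg mult_neg_pos) auto
qed

lemma c2_pos: "- v * ((a - v + b) + 2) / (a - v - b) > 0"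
proof (cases "v > 0")
  case True
  then show ?thesis using hv1 hv2 by (intro divide_neg_neg mult_neg_pos) auto
next
  case False
  then have "v < 0" using nz by auto
  then show ?thesis using hv1 hv2 by (intro divide_pos_pos mult_pos_pos) auto
qed

lemma p_pos: "v * ((a + v + b) + 2) / (a + v - b) * t^2 - ((a + v + b) + 2) * t + (a + 1) > 0"
proof -
  define c where "c = v * ((a + v + b) + 2) / (a + v - b)"
  have c: "c > 0" using c1_pos c_def by simp
  have key: "4*c*(a+1) - (a+v+b+2)^2 = (a+b+2+v)*(a+b+2-v)*(v-(a-b))/(a+v-b)"
    unfolding c_def using nz by (simp add: field_simps) (simp add: algebra_simps power2_eq_square)
  have "(a+b+2+v)*(a+b+2-v)*(v-(a-b))/(a+v-b) > 0"
  proof (cases "v > 0")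
    case True then show ?thesis using hv1 hv2 by (intro divide_pos_pos mult_pos_pos) auto
  next
    case False then have "v < 0" using nz by auto
    then show ?thesis using hv1 hv2 by (intro divide_neg_neg mult_pos_neg) auto
  qed
  then have k: "4*c*(a+1) - (a+v+b+2)^2 > 0" using key by simp
  have "4*c*(c * t^2 - ((a + v + b) + 2) * t + (a + 1)) = (2*c*t - (a+v+b+2))^2 + (4*c*(a+1) - (a+v+b+2)^2)"
    by (simp add: algebra_simps power2_eq_square)
  also have "\<dots> > 0" using k by (smt (verit) zero_le_power2)
  finally show ?thesis unfolding c_def[symmetric] using c by (simp add: zero_less_mult_iff)
qed

lemma det_eq: "(v * ((a + v + b) + 2) / (a + v - b) * t^2 - ((a + v + b) + 2) * t + (a + 1)) *
   (- v * ((a - v + b) + 2) / (a - v - b) * t^2 - ((a - v + b) + 2) * t + (a + 1))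
   - ((a + b + 2) * t - (a + 1))^2 =
   (v * ((a + v + b) + 2) / (a + v - b)) * (- v * ((a - v + b) + 2) / (a - v - b)) * t^2 * (1-t)^2"
proof -
  have "(a + v - b) * (a - v - b) \<noteq> 0" using nz by simp
  then have n3: "a * a + b * b - (v * v + a * (b * 2)) \<noteq> 0" by (simp add: algebra_simps)
  show ?thesis using nz n3 by (simp add: field_simps) (simp add: algebra_simps power2_eq_square eval_nat_numeral)
qed

end


lemma quad_pos:
  fixes p q r y1 y2 :: real
  assumes "p > 0" "p * r - q^2 > 0" "y1 \<noteq> 0 \<or> y2 \<noteq> 0"
  shows "p * y1^2 + 2 * q * y1 * y2 + r * y2^2 > 0"
proof -
  have e: "p * (p * y1^2 + 2 * q * y1 * y2 + r * y2^2) = (p*y1 + q*y2)^2 + (p*r - q^2) * y2^2"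
    by (simp add: algebra_simps power2_eq_square)
  have "(p*y1 + q*y2)^2 + (p*r - q^2) * y2^2 > 0"
  proof (cases "y2 = 0")
    case True then have "y1 \<noteq> 0" using assms by auto
    then show ?thesis using True assms by simp
  next
    case False then show ?thesis using assms
      by (smt (verit) mult_pos_pos zero_le_power2 zero_less_power2)
  qed
  then show ?thesis using e assms(1) by (metis zero_less_mult_pos)
qed

lemma pos_def_real_sym:
  fixes A :: "real^2^2"
  assumes "A$1$2 = A$2$1" "A$1$1 > 0" "A$1$1 * A$2$2 - (A$1$2)^2 > 0"
  shows "pos_def (cmat A)"
  unfolding pos_def_def
proof
  show "mstar (cmat A) = cmat A" using assms by (simp add: mat22_eq_iff)
  show "\<forall>x::complex^2. x \<noteq> 0 \<longrightarrow> 0 < Re (\<Sum>i\<in>UNIV. cnj (x $ i) * (cmat A *v x) $ i)"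
  proof (intro allI impI)
    fix x :: "complex^2"
    assume "x \<noteq> 0"
    then have nz: "x$1 \<noteq> 0 \<or> x$2 \<noteq> 0" by (auto simp: vec_eq_iff forall_2)
    define F where "F y1 y2 = A$1$1 * y1^2 + 2 * A$1$2 * y1 * y2 + A$2$2 * y2^2" for y1 y2
    have e: "Re (\<Sum>i\<in>UNIV. cnj (x $ i) * (cmat A *v x) $ i) = F (Re (x$1)) (Re (x$2)) + F (Im (x$1)) (Im (x$2))"
      using assms(1) by (simp add: F_def sum_2 matrix_vector_mult_def algebra_simps power2_eq_square)
    have F0: "F y1 y2 \<ge> 0" for y1 y2
      using quad_pos[OF assms(2,3), of y1 y2] by (cases "y1 = 0 \<and> y2 = 0") (auto simp: F_def)
    have "Re (x$1) \<noteq> 0 \<or> Re (x$2) \<noteq> 0 \<or> Im (x$1) \<noteq> 0 \<or> Im (x$2) \<noteq> 0"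
      using nz complex_eq_iff by auto
    then have "F (Re (x$1)) (Re (x$2)) > 0 \<or> F (Im (x$1)) (Im (x$2)) > 0"
      using quad_pos[OF assms(2,3)] unfolding F_def by blast
    then show "0 < Re (\<Sum>i\<in>UNIV. cnj (x $ i) * (cmat A *v x) $ i)" using e F0
      by (smt (verit))
  qed
qed

context parms begin

lemma pos_def_W:
  assumes "0 < t" "t < 1"
  shows "pos_def (Wabv a b v t)"
proof -
  define s where "s = t powr a * (1-t) powr b"
  have s: "s > 0" using assms by (simp add: s_def)
  show ?thesis unfolding Wabv_eq s_def[symmetric]
  proof (rule pos_def_real_sym)
    show "(s *\<^sub>R Wp a b v t) $ 1 $ 2 = (s *\<^sub>R Wp a b v t) $ 2 $ 1" by (simp add: Wp_def)
    show "(s *\<^sub>R Wp a b v t) $ 1 $ 1 > 0" using s p_pos by (simp add: Wp_def)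
    have "t^2 * (1-t)^2 > 0" using assms by simp
    then have "(v * ((a + v + b) + 2) / (a + v - b)) * (- v * ((a - v + b) + 2) / (a - v - b)) * t^2 * (1-t)^2 > 0"
      using c1_pos c2_pos by (intro mult_pos_pos) auto
    then have "(Wp a b v t) $ 1 $ 1 * (Wp a b v t) $ 2 $ 2 - ((Wp a b v t) $ 1 $ 2)^2 > 0"
      using det_eq[of t] by (simp add: Wp_def)
    then show "(s *\<^sub>R Wp a b v t) $ 1 $ 1 * (s *\<^sub>R Wp a b v t) $ 2 $ 2 - ((s *\<^sub>R Wp a b v t) $ 1 $ 2)^2 > 0"
      using s by (simp add: power2_eq_square algebra_simps)
  qed
qed

end


lemma cmat_scaleR: "cmat (c *\<^sub>R A) = c *\<^sub>R cmat A"
  by (simp add: mat22_eq_iff) (simp add: scaleR_conv_of_real)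
lemma cmat_add: "cmat (A + B) = cmat A + cmat B"
  by (simp add: mat22_eq_iff)
lemma cmat_diff: "cmat (A - B) = cmat A - cmat B"
  by (simp add: mat22_eq_iff)

definition A0 :: "real \<Rightarrow> real \<Rightarrow> real \<Rightarrow> real^2^2" where
  "A0 a b v = mat2 (a+1) (-(a+1)) (-(a+1)) (a+1)"
definition A1 :: "real \<Rightarrow> real \<Rightarrow> real \<Rightarrow> real^2^2" where
  "A1 a b v = mat2 (-((a + v + b) + 2)) (a+b+2) (a+b+2) (-((a - v + b) + 2))"
definition A2 :: "real \<Rightarrow> real \<Rightarrow> real \<Rightarrow> real^2^2" where
  "A2 a b v = mat2 (v * ((a + v + b) + 2) / (a + v - b)) 0 0 (- v * ((a - v + b) + 2) / (a - v - b))"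

lemma Wp_expand: "Wp a b v t = A0 a b v + t *\<^sub>R A1 a b v + t^2 *\<^sub>R A2 a b v"
  by (simp add: mat22_eq_iff Wp_def A0_def A1_def A2_def algebra_simps)

lemma beta_integrable:
  fixes a b :: real and N :: nat
  assumes "a > -1" "b > -1"
  shows "(\<lambda>t. t^N * (t powr a * (1-t) powr b)) absolutely_integrable_on {0<..<1}"
proof (rule nonnegative_absolutely_integrable_1)
  have "((\<lambda>t. t powr ((a+N+1) - 1) * (1 - t) powr ((b+1) - 1)) has_integral Beta (a+N+1) (b+1)) {0<..<1}"
    using has_integral_Beta_real[of "a+N+1" "b+1"] assms by (simp add: has_integral_Icc_iff_Ioo)
  then have "(\<lambda>t. t powr ((a+N+1) - 1) * (1 - t) powr ((b+1) - 1)) integrable_on {0<..<1}" by blast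
  then show "(\<lambda>t. t^N * (t powr a * (1-t) powr b)) integrable_on {0<..<1}"
    by (rule integrable_eq) (simp add: powr_add powr_realpow)
  show "\<And>x. x \<in> {0<..<1} \<Longrightarrow> 0 \<le> x^N * (x powr a * (1-x) powr b)" by simp
qed

lemma weight_matrix_W:
  assumes "parms a b v"
  shows "weight_matrix (Wabv a b v)"
  unfolding weight_matrix_def
proof
  interpret parms a b v by fact
  show "AE t in lebesgue. t \<in> {0<..<1} \<longrightarrow> pos_def (Wabv a b v t)"
    using pos_def_W by auto
  show "\<forall>n. (\<lambda>t. t ^ n *\<^sub>R Wabv a b v t) absolutely_integrable_on {0<..<1}"
  proof
    fix n :: nat
    have e: "t ^ n *\<^sub>R Wabv a b v t =
       (t^n * (t powr a * (1-t) powr b)) *\<^sub>R cmat (A0 a b v)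
     + (t^(n+1) * (t powr a * (1-t) powr b)) *\<^sub>R cmat (A1 a b v)
     + (t^(n+2) * (t powr a * (1-t) powr b)) *\<^sub>R cmat (A2 a b v)" for t
      by (simp add: Wabv_eq Wp_expand cmat_scaleR cmat_add scaleR_add_right algebra_simps power_add power2_eq_square)
    show "(\<lambda>t. t ^ n *\<^sub>R Wabv a b v t) absolutely_integrable_on {0<..<1}"
      unfolding e
      by (intro set_integral_add(1) absolutely_integrable_scaleR_right beta_integrable ha hb)
  qed
qed



definition off :: "complex^2^2 \<Rightarrow> real^2^2 \<Rightarrow> complex" where
  "off M X = M$1$1*X$1$1*cnj(M$2$1) + M$1$1*X$1$2*cnj(M$2$2) + M$1$2*X$2$1*cnj(M$2$1) + M$1$2*X$2$2*cnj(M$2$2)"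

lemma off_eq: "(M ** cmat X ** mstar M) $ 1 $ 2 = off M X"
  by (simp add: off_def algebra_simps)

lemma off_lin: "off M (A + B) = off M A + off M B" "off M (c *\<^sub>R A) = of_real c * off M A"
  by (simp_all add: off_def algebra_simps)

lemma quad_zero:
  fixes f0 f1 f2 :: complex
  assumes "\<And>t::real. 0 < t \<Longrightarrow> t < 1 \<Longrightarrow> f0 + of_real t * f1 + of_real (t^2) * f2 = 0"
  shows "f0 = 0" "f1 = 0"
proof -
  have e1: "f0 + f1/4 + f2/16 = 0" using assms[of "1/4"] by (simp add: power2_eq_square)
  have e2: "f0 + f1/2 + f2/4 = 0" using assms[of "1/2"] by (simp add: power2_eq_square)
  have e3: "f0 + 3*f1/4 + 9*f2/16 = 0" using assms[of "3/4"] by (simp add: power2_eq_square)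
  have "(f0 + 3*f1/4 + 9*f2/16) - 2*(f0 + f1/2 + f2/4) + (f0 + f1/4 + f2/16) = f2/8"
    by (simp add: algebra_simps)
  then have z2: "f2 = 0" using e1 e2 e3 by simp
  have "f1/4 + 3*f2/16 = (f0 + f1/2 + f2/4) - (f0 + f1/4 + f2/16)"
    by (simp add: algebra_simps)
  also have "\<dots> = 0" using e1 e2 by simp
  finally have "f1/4 = 0" using z2 by simp
  then show z1: "f1 = 0" by simp
  show "f0 = 0" using e1 z1 z2 by simp
qed

lemma irreducible_W:
  assumes "parms a b v"
  shows "irreducible_weight (Wabv a b v)"
  unfolding irreducible_weight_def
proof
  interpret parms a b v by fact
  assume "\<exists>M::complex^2^2. invertible M \<and> (\<forall>t\<in>{0<..<1}. is_diag (M ** Wabv a b v t ** mstar M))"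
  then obtain M :: "complex^2^2" where inv: "invertible M"
    and d: "\<And>t. t \<in> {0<..<1} \<Longrightarrow> is_diag (M ** Wabv a b v t ** mstar M)" by blast
  have "off M (A0 a b v) + of_real t * off M (A1 a b v) + of_real (t^2) * off M (A2 a b v) = 0"
    if "0 < t" "t < 1" for t
  proof -
    have s: "t powr a * (1-t) powr b > 0" using that by simp
    have "(M ** Wabv a b v t ** mstar M) $ 1 $ 2 = 0" using d[of t] that by (simp add: is_diag_def)
    then have "of_real (t powr a * (1-t) powr b) * (off M (A0 a b v) + of_real t * off M (A1 a b v) + of_real (t^2) * off M (A2 a b v)) = 0"
      unfolding Wabv_eq off_eq Wp_expand by (simp add: off_lin algebra_simps)
    then show ?thesis using s that by simp
  qed
  from quad_zero[OF this] have f0: "off M (A0 a b v) = 0" and f1: "off M (A1 a b v) = 0" by auto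
  have det: "M$1$1 * M$2$2 - M$1$2 * M$2$1 \<noteq> 0"
    using inv by (simp add: invertible_det_nz det_2)
  have "a + 1 \<noteq> 0" using ha by simp
  then have a1: "complex_of_real (a+1) \<noteq> 0" by (metis of_real_eq_0_iff)
  have "of_real (a+1) * ((M$1$1 - M$1$2) * (cnj (M$2$1) - cnj (M$2$2))) = 0"
    using f0 by (simp add: off_def A0_def algebra_simps)
  then have "M$1$1 = M$1$2 \<or> cnj (M$2$1) = cnj (M$2$2)" using a1 by simp
  then show False
  proof
    assume e: "M$1$1 = M$1$2"
    have "M$1$1 * of_real v * (cnj (M$2$2) - cnj (M$2$1)) = 0"
      using f1 e by (simp add: off_def A1_def algebra_simps)
    then have "M$1$1 = 0 \<or> cnj (M$2$2) = cnj (M$2$1)" using nz by simp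
    then show False using det e by (auto simp: complex_cnj_cancel_iff)
  next
    assume e: "cnj (M$2$1) = cnj (M$2$2)"
    have "cnj (M$2$1) * of_real v * (M$1$2 - M$1$1) = 0"
      using f1 e by (simp add: off_def A1_def algebra_simps)
    then have "cnj (M$2$1) = 0 \<or> M$1$2 = M$1$1" using nz by simp
    then show False using det e by (auto simp: complex_cnj_cancel_iff)
  qed
qed



type_synonym cm = "complex^2^2"

lemma mm_add_r: "((A::'a::semiring_1^'n^'m) + B) ** C = A ** C + B ** C"
  by (vector matrix_matrix_mult_def sum.distrib[symmetric] field_simps)
lemma mm_diff_r: "((A::'a::ring_1^'n^'m) - B) ** C = A ** C - B ** C"
  by (vector matrix_matrix_mult_def sum_subtractf[symmetric] field_simps)
lemma mm_diff_l: "(A::'a::ring_1^'n^'m) ** (B - C) = A ** B - A ** C"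
  by (vector matrix_matrix_mult_def sum_subtractf[symmetric] field_simps)
lemma mm_scale_l: "((c::real) *\<^sub>R (A::cm)) ** B = c *\<^sub>R (A ** B)"
  by (simp add: vec_eq_iff matrix_matrix_mult_def scaleR_sum_right)
lemma mm_scale_r: "(A::cm) ** ((c::real) *\<^sub>R B) = c *\<^sub>R (A ** B)"
  by (simp add: vec_eq_iff matrix_matrix_mult_def scaleR_sum_right)
lemma mstar_mm: "mstar ((A::cm) ** B) = mstar B ** mstar A"
  by (simp add: mat22_eq_iff algebra_simps)
lemma mstar_add: "mstar ((A::cm) + B) = mstar A + mstar B"
  by (simp add: mat22_eq_iff)
lemma mstar_diff: "mstar ((A::cm) - B) = mstar A - mstar B"
  by (simp add: mat22_eq_iff)
lemma mstar_scale: "mstar ((c::real) *\<^sub>R (A::cm)) = c *\<^sub>R mstar A"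
  by (simp add: mat22_eq_iff)

lemmas mm_simps = matrix_mul_assoc[symmetric] mm_add_r matrix_add_ldistrib mm_diff_r mm_diff_l mm_scale_l mm_scale_r
  mstar_mm mstar_add mstar_diff mstar_scale

lemma alg:
  fixes P Pd Pdd Q Qd Qdd Wm Wd S F V :: cm and s \<phi> \<psi> :: real
  assumes ia: "F ** Wm = \<psi> *\<^sub>R Wm + \<phi> *\<^sub>R Wd + \<phi> *\<^sub>R S"
    and ib: "Wm ** mstar F = \<psi> *\<^sub>R Wm + \<phi> *\<^sub>R Wd - \<phi> *\<^sub>R S"
    and ic: "V ** Wm = Wm ** V - \<psi> *\<^sub>R S"
    and vs: "mstar V = V"
  shows "(s*\<phi>) *\<^sub>R (
      (Pd ** Wm ** mstar Qd + (Pd ** Wd + Pdd ** Wm) ** mstar Q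
        - (P ** Wm ** mstar Qdd + (P ** Wd + Pd ** Wm) ** mstar Qd))
      + (P ** S ** mstar Qd + Pd ** S ** mstar Q))
    + (s*\<psi>) *\<^sub>R (Pd ** Wm ** mstar Q - P ** Wm ** mstar Qd + P ** S ** mstar Q)
    = (\<phi> *\<^sub>R Pdd + Pd ** F - P ** V) ** (s *\<^sub>R Wm) ** mstar Q
      - P ** (s *\<^sub>R Wm) ** mstar (\<phi> *\<^sub>R Qdd + Qd ** F - Q ** V)"
proof -
  have ia': "F ** (Wm ** X) = \<psi> *\<^sub>R (Wm ** X) + \<phi> *\<^sub>R (Wd ** X) + \<phi> *\<^sub>R (S ** X)" for X
    by (simp add: matrix_mul_assoc ia mm_add_r mm_scale_l)
  have ib': "Wm ** (mstar F ** X) = \<psi> *\<^sub>R (Wm ** X) + \<phi> *\<^sub>R (Wd ** X) - \<phi> *\<^sub>R (S ** X)" for X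
    by (simp add: matrix_mul_assoc ib mm_add_r mm_diff_r mm_scale_l)
  have ic': "V ** (Wm ** X) = Wm ** (V ** X) - \<psi> *\<^sub>R (S ** X)" for X
    by (simp add: matrix_mul_assoc ic mm_diff_r mm_scale_l)
  show ?thesis
    by (simp add: mm_simps ia' ib' ic' vs algebra_simps)
qed



lemma scaleR_nth_real[simp]: "((c::real) *\<^sub>R (A::real^2^2)) $ i $ j = c * A $ i $ j"
  by simp
lemma cmat_mm: "cmat (A ** B) = cmat A ** cmat B"
  by (simp add: mat22_eq_iff)
lemma mstar_cmat: "mstar (cmat A) = cmat (transpose A)"
  by (simp add: mat22_eq_iff transpose_def)

context parms begin

definition "c1 = v * ((a + v + b) + 2) / (a + v - b)"
definition "c2 = - v * ((a - v + b) + 2) / (a - v - b)"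
definition "e1 = (a - v - b) / v"
definition "e2 = (a + v - b) / v"

lemma rels: "c1 * (a + v - b) = v * ((a + v + b) + 2)" "c2 * (a - v - b) = - v * ((a - v + b) + 2)"
  "e1 * v = a - v - b" "e2 * v = a + v - b"
  using nz by (simp_all add: c1_def c2_def e1_def e2_def)

lemma Cmat_alt: "Cmat a b v = mat2 (a+1-e1) e2 (-e1) (a+1+e2)"
  unfolding Cmat_def e1_def e2_def by (simp only: minus_divide_left)
lemma Wp_alt: "Wp a b v t = mat2 (c1 * t^2 - ((a + v + b) + 2) * t + (a + 1)) ((a + b + 2) * t - (a + 1))
   ((a + b + 2) * t - (a + 1)) (c2 * t^2 - ((a - v + b) + 2) * t + (a + 1))"
  by (simp add: Wp_def c1_def c2_def)
lemma A2_alt: "A2 a b v = mat2 c1 0 0 c2"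
  by (simp add: A2_def c1_def c2_def)

definition "FmR t = transpose (Cmat a b v) - t *\<^sub>R ((a+b+4) *\<^sub>R mat 1)"
definition "Fm t = mstar (cmat (Cmat a b v)) - t *\<^sub>R cmat ((a+b+4) *\<^sub>R mat 1)"
definition "Wm t = cmat (Wp a b v t)"
definition "WdR t = A1 a b v + (2*t) *\<^sub>R A2 a b v"
definition "Wd t = cmat (WdR t)"
definition "SR = mat2 0 v (-v) 0"
definition "Sm = cmat SR"
definition "Vc = cmat (Vmat v)"

lemma Fm_eq: "Fm t = cmat (FmR t)"
  by (simp add: Fm_def FmR_def mstar_cmat cmat_diff cmat_scaleR)

lemma iaR: "FmR t ** Wp a b v t = ((a+1)*(1-t) - (b+1)*t) *\<^sub>R Wp a b v t + (t*(1-t)) *\<^sub>R WdR t + (t*(1-t)) *\<^sub>R SR"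
  unfolding FmR_def WdR_def SR_def
  apply (simp add: mat22_eq_iff Cmat_alt Wp_alt A1_def A2_alt transpose_def)
  using rels nz by algebra

lemma ibR: "Wp a b v t ** transpose (FmR t) = ((a+1)*(1-t) - (b+1)*t) *\<^sub>R Wp a b v t + (t*(1-t)) *\<^sub>R WdR t - (t*(1-t)) *\<^sub>R SR"
  unfolding FmR_def WdR_def SR_def
  apply (simp add: mat22_eq_iff Cmat_alt Wp_alt A1_def A2_alt transpose_def)
  using rels nz by algebra

lemma icR: "Vmat v ** Wp a b v t = Wp a b v t ** Vmat v - ((a+1)*(1-t) - (b+1)*t) *\<^sub>R SR"
  unfolding SR_def
  by (simp add: mat22_eq_iff Vmat_def Wp_alt algebra_simps)

lemma ia: "Fm t ** Wm t = ((a+1)*(1-t) - (b+1)*t) *\<^sub>R Wm t + (t*(1-t)) *\<^sub>R Wd t + (t*(1-t)) *\<^sub>R Sm"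
  unfolding Fm_eq Wm_def Wd_def Sm_def cmat_mm[symmetric] iaR by (simp add: cmat_add cmat_scaleR)

lemma ib: "Wm t ** mstar (Fm t) = ((a+1)*(1-t) - (b+1)*t) *\<^sub>R Wm t + (t*(1-t)) *\<^sub>R Wd t - (t*(1-t)) *\<^sub>R Sm"
  unfolding Fm_eq Wm_def Wd_def Sm_def mstar_cmat cmat_mm[symmetric] ibR by (simp add: cmat_add cmat_diff cmat_scaleR)

lemma ic: "Vc ** Wm t = Wm t ** Vc - ((a+1)*(1-t) - (b+1)*t) *\<^sub>R Sm"
  unfolding Vc_def Wm_def Sm_def cmat_mm[symmetric] icR by (simp add: cmat_diff cmat_scaleR)

lemma vs: "mstar Vc = Vc"
  unfolding Vc_def by (simp add: mat22_eq_iff Vmat_def)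

end


lemma bb: "bounded_bilinear (\<lambda>(A::cm) (B::cm). A ** B)"
proof -
  have "bilinear (\<lambda>(A::cm) (B::cm). A ** B)"
    unfolding bilinear_def
    by (auto intro!: linearI simp: matrix_add_ldistrib mm_add_r mm_scale_l mm_scale_r)
  then show ?thesis by (simp add: bilinear_conv_bounded_bilinear)
qed

lemma bl: "bounded_linear (mstar :: cm \<Rightarrow> cm)"
proof -
  have "linear (mstar :: cm \<Rightarrow> cm)"
    by (auto intro!: linearI simp: mstar_add mstar_scale)
  then show ?thesis by (simp add: linear_conv_bounded_linear)
qed

lemma mm_vd:
  fixes f g :: "real \<Rightarrow> cm"
  assumes "(f has_vector_derivative f') (at x)" "(g has_vector_derivative g') (at x)"
  shows "((\<lambda>x. (f x::cm) ** g x) has_vector_derivative (f x ** g' + f' ** g x)) (at x)"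
  using bounded_bilinear.has_vector_derivative[OF bb assms] by simp

lemma mstar_vd:
  fixes f :: "real \<Rightarrow> cm"
  assumes "(f has_vector_derivative f') (at x)"
  shows "((\<lambda>x. mstar (f x::cm)) has_vector_derivative mstar f') (at x)"
  using bounded_linear.has_vector_derivative[OF bl assms] .

lemma sum_vd:
  assumes "\<And>i. (g i has_real_derivative g' i) (at t)"
  shows "((\<lambda>t. \<Sum>i\<le>n. g i t *\<^sub>R (c i :: 'a::real_normed_vector)) has_vector_derivative (\<Sum>i\<le>n. g' i *\<^sub>R c i)) (at t)"
  by (intro has_vector_derivative_sum has_vector_derivative_scaleR[of _ _ _ _ _ 0, simplified] assms)
    (simp_all)

lemma matpoly_deriv:
  assumes "matpoly P"
  shows "\<exists>P1 P2. (\<forall>t. (P has_vector_derivative P1 t) (at t)) \<and> (\<forall>t. (P1 has_vector_derivative P2 t) (at t))"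
proof -
  obtain c n where P: "\<And>t. P t = (\<Sum>i\<le>n. (t ^ i) *\<^sub>R c i)" using assms unfolding matpoly_def by blast
  define P1 where "P1 t = (\<Sum>i\<le>n. (real i * t ^ (i - 1)) *\<^sub>R c i)" for t
  define P2 where "P2 t = (\<Sum>i\<le>n. (real i * (real (i - 1) * t ^ (i - 1 - 1))) *\<^sub>R c i)" for t
  have "P = (\<lambda>t. \<Sum>i\<le>n. (t ^ i) *\<^sub>R c i)" using P by auto
  then have d1: "(P has_vector_derivative P1 t) (at t)" for t
    unfolding P1_def by (auto intro!: sum_vd DERIV_pow)
  have d2: "(P1 has_vector_derivative P2 t) (at t)" for t
    unfolding P1_def P2_def
    by (intro sum_vd) (auto intro!: derivative_eq_intros)
  show ?thesis using d1 d2 by blast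
qed



context parms begin

definition "gg t = t powr (a+1) * (1-t) powr (b+1)"

lemma g_deriv:
  assumes "0 < t" "t < 1"
  shows "(gg has_real_derivative (t powr a * (1-t) powr b) * ((a+1)*(1-t) - (b+1)*t)) (at t)"
proof -
  have "(gg has_real_derivative ((a+1) * t powr (a+1-1) * (-1)*(-1) * (1-t) powr (b+1)
        + t powr (a+1) * ((b+1) * (1-t) powr (b+1-1) * (-1)))) (at t)"
    unfolding gg_def using assms
    by (auto intro!: derivative_eq_intros)
  moreover have "(a+1) * t powr (a+1-1) * (-1)*(-1) * (1-t) powr (b+1)
        + t powr (a+1) * ((b+1) * (1-t) powr (b+1-1) * (-1)) = (t powr a * (1-t) powr b) * ((a+1)*(1-t) - (b+1)*t)"
    using assms by (simp add: powr_add algebra_simps)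
  ultimately show ?thesis by simp
qed

lemma Wm_deriv: "(Wm has_vector_derivative Wd t) (at t)"
proof -
  have e: "Wm = (\<lambda>t. cmat (A0 a b v) + t *\<^sub>R cmat (A1 a b v) + t^2 *\<^sub>R cmat (A2 a b v))"
    by (auto simp: Wm_def Wp_expand cmat_add cmat_scaleR)
  have d: "((\<lambda>t. cmat (A0 a b v) + t *\<^sub>R cmat (A1 a b v) + t^2 *\<^sub>R cmat (A2 a b v)) has_vector_derivative
     (0 + (t *\<^sub>R 0 + 1 *\<^sub>R cmat (A1 a b v)) + (t^2 *\<^sub>R 0 + (real 2 * t^(2 - Suc 0)) *\<^sub>R cmat (A2 a b v)))) (at t)"
    by (intro has_vector_derivative_add has_vector_derivative_const has_vector_derivative_scaleR DERIV_ident DERIV_pow)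
  have "Wd t = 0 + (t *\<^sub>R 0 + 1 *\<^sub>R cmat (A1 a b v)) + (t^2 *\<^sub>R 0 + (real 2 * t^(2 - Suc 0)) *\<^sub>R cmat (A2 a b v))"
    by (simp add: Wd_def WdR_def cmat_add cmat_scaleR)
  then show ?thesis unfolding e using d by simp
qed

lemma gg_eq: "0 < t \<Longrightarrow> t < 1 \<Longrightarrow> gg t = (t powr a * (1-t) powr b) * (t*(1-t))"
  by (simp add: gg_def powr_add)

lemma Wabv_Wm: "Wabv a b v t = (t powr a * (1-t) powr b) *\<^sub>R Wm t"
  by (simp add: Wabv_eq Wm_def cmat_scaleR)

lemma H_deriv:
  fixes P P1 P2 Q Q1 Q2 :: "real \<Rightarrow> cm"
  assumes dP: "\<And>t. (P has_vector_derivative P1 t) (at t)" and dP1: "\<And>t. (P1 has_vector_derivative P2 t) (at t)"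
    and dQ: "\<And>t. (Q has_vector_derivative Q1 t) (at t)" and dQ1: "\<And>t. (Q1 has_vector_derivative Q2 t) (at t)"
    and t: "0 < t" "t < 1"
  shows "((\<lambda>t. gg t *\<^sub>R (P1 t ** Wm t ** mstar (Q t) - P t ** Wm t ** mstar (Q1 t) + P t ** Sm ** mstar (Q t)))
     has_vector_derivative
     (((t*(1-t)) *\<^sub>R P2 t + P1 t ** Fm t - P t ** Vc) ** Wabv a b v t ** mstar (Q t)
       - P t ** Wabv a b v t ** mstar ((t*(1-t)) *\<^sub>R Q2 t + Q1 t ** Fm t - Q t ** Vc))) (at t)"
proof -
  have K: "((\<lambda>t. P1 t ** Wm t ** mstar (Q t) - P t ** Wm t ** mstar (Q1 t) + P t ** Sm ** mstar (Q t)) has_vector_derivative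
    ((P1 t ** Wm t ** mstar (Q1 t) + (P1 t ** Wd t + P2 t ** Wm t) ** mstar (Q t))
     - (P t ** Wm t ** mstar (Q2 t) + (P t ** Wd t + P1 t ** Wm t) ** mstar (Q1 t))
     + (P t ** Sm ** mstar (Q1 t) + (P t ** 0 + P1 t ** Sm) ** mstar (Q t)))) (at t)"
    by (intro has_vector_derivative_add has_vector_derivative_diff mm_vd mstar_vd Wm_deriv
        has_vector_derivative_const dP dP1 dQ dQ1)
  note raw = has_vector_derivative_scaleR[OF g_deriv[OF t] K]
  define s where "s = t powr a * (1-t) powr b"
  have e: "gg t *\<^sub>R ((P1 t ** Wm t ** mstar (Q1 t) + (P1 t ** Wd t + P2 t ** Wm t) ** mstar (Q t))
     - (P t ** Wm t ** mstar (Q2 t) + (P t ** Wd t + P1 t ** Wm t) ** mstar (Q1 t))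
     + (P t ** Sm ** mstar (Q1 t) + (P t ** 0 + P1 t ** Sm) ** mstar (Q t)))
    + (s * ((a+1)*(1-t) - (b+1)*t)) *\<^sub>R (P1 t ** Wm t ** mstar (Q t) - P t ** Wm t ** mstar (Q1 t) + P t ** Sm ** mstar (Q t))
    = (((t*(1-t)) *\<^sub>R P2 t + P1 t ** Fm t - P t ** Vc) ** Wabv a b v t ** mstar (Q t)
       - P t ** Wabv a b v t ** mstar ((t*(1-t)) *\<^sub>R Q2 t + Q1 t ** Fm t - Q t ** Vc))"
    unfolding gg_eq[OF t] Wabv_Wm s_def[symmetric]
    using alg[where s=s and P="P t" and Pd="P1 t" and Pdd="P2 t" and Q="Q t" and Qd="Q1 t" and Qdd="Q2 t", OF ia ib ic vs] by simp
  show ?thesis using raw unfolding s_def[symmetric] e .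
qed

end


context parms begin

lemma K_deriv:
  fixes P P1 P2 Q Q1 Q2 :: "real \<Rightarrow> cm"
  assumes dP: "\<And>t. (P has_vector_derivative P1 t) (at t)" and dP1: "\<And>t. (P1 has_vector_derivative P2 t) (at t)"
    and dQ: "\<And>t. (Q has_vector_derivative Q1 t) (at t)" and dQ1: "\<And>t. (Q1 has_vector_derivative Q2 t) (at t)"
  shows "((\<lambda>t. P1 t ** Wm t ** mstar (Q t) - P t ** Wm t ** mstar (Q1 t) + P t ** Sm ** mstar (Q t)) has_vector_derivative
    ((P1 t ** Wm t ** mstar (Q1 t) + (P1 t ** Wd t + P2 t ** Wm t) ** mstar (Q t))
     - (P t ** Wm t ** mstar (Q2 t) + (P t ** Wd t + P1 t ** Wm t) ** mstar (Q1 t))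
     + (P t ** Sm ** mstar (Q1 t) + (P t ** 0 + P1 t ** Sm) ** mstar (Q t)))) (at t)"
    by (intro has_vector_derivative_add has_vector_derivative_diff mm_vd mstar_vd Wm_deriv
        has_vector_derivative_const dP dP1 dQ dQ1)

lemma gg_cont: "continuous_on {0..1} gg"
  unfolding gg_def using ha hb
  by (intro continuous_intros continuous_on_powr') auto

lemma sym_core:
  fixes P P1 P2 Q Q1 Q2 :: "real \<Rightarrow> cm"
  assumes dP: "\<And>t. (P has_vector_derivative P1 t) (at t)" and dP1: "\<And>t. (P1 has_vector_derivative P2 t) (at t)"
    and dQ: "\<And>t. (Q has_vector_derivative Q1 t) (at t)" and dQ1: "\<And>t. (Q1 has_vector_derivative Q2 t) (at t)"
  shows "((\<lambda>t. ((t*(1-t)) *\<^sub>R P2 t + P1 t ** Fm t - P t ** Vc) ** Wabv a b v t ** mstar (Q t)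
       - P t ** Wabv a b v t ** mstar ((t*(1-t)) *\<^sub>R Q2 t + Q1 t ** Fm t - Q t ** Vc)) has_integral 0) {0<..<1}"
proof -
  define K where "K t = P1 t ** Wm t ** mstar (Q t) - P t ** Wm t ** mstar (Q1 t) + P t ** Sm ** mstar (Q t)" for t
  define H where "H t = gg t *\<^sub>R K t" for t
  have Kc: "continuous_on {0..1} K"
    unfolding K_def
    by (intro continuous_at_imp_continuous_on ballI has_vector_derivative_continuous[OF K_deriv[OF dP dP1 dQ dQ1]])
  have Hc: "continuous_on {0..1} H" unfolding H_def by (intro continuous_on_scaleR gg_cont Kc)
  have "(H has_vector_derivative (((t*(1-t)) *\<^sub>R P2 t + P1 t ** Fm t - P t ** Vc) ** Wabv a b v t ** mstar (Q t)
       - P t ** Wabv a b v t ** mstar ((t*(1-t)) *\<^sub>R Q2 t + Q1 t ** Fm t - Q t ** Vc))) (at t)"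
    if "t \<in> {0<..<1}" for t
    unfolding H_def K_def using that by (intro H_deriv dP dP1 dQ dQ1) auto
  from fundamental_theorem_of_calculus_interior[OF _ Hc this]
  have "((\<lambda>t. ((t*(1-t)) *\<^sub>R P2 t + P1 t ** Fm t - P t ** Vc) ** Wabv a b v t ** mstar (Q t)
       - P t ** Wabv a b v t ** mstar ((t*(1-t)) *\<^sub>R Q2 t + Q1 t ** Fm t - Q t ** Vc)) has_integral H 1 - H 0) {0..1}"
    by simp
  moreover have "H 1 - H 0 = 0" using ha hb by (simp add: H_def gg_def)
  ultimately show ?thesis by (simp add: has_integral_Icc_iff_Ioo)
qed

lemma symmetric:
  fixes D :: "(real \<Rightarrow> cm) \<Rightarrow> (real \<Rightarrow> cm)"
  assumes hD: "\<And>P P1 P2. (\<And>t. (P has_vector_derivative P1 t) (at t)) \<Longrightarrow> (\<And>t. (P1 has_vector_derivative P2 t) (at t))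
     \<Longrightarrow> D P = (\<lambda>t. (t*(1-t)) *\<^sub>R P2 t + P1 t ** Fm t - P t ** Vc)"
  shows "symmetric_op D (Wabv a b v)"
  unfolding symmetric_op_def
proof (intro allI impI)
  fix P Q :: "real \<Rightarrow> cm"
  assume "matpoly P" "matpoly Q"
  then obtain P1 P2 Q1 Q2 where dP: "\<And>t. (P has_vector_derivative P1 t) (at t)" and dP1: "\<And>t. (P1 has_vector_derivative P2 t) (at t)"
    and dQ: "\<And>t. (Q has_vector_derivative Q1 t) (at t)" and dQ1: "\<And>t. (Q1 has_vector_derivative Q2 t) (at t)"
    using matpoly_deriv by meson
  define f1 where "f1 t = D P t ** Wabv a b v t ** mstar (Q t)" for t
  define f2 where "f2 t = P t ** Wabv a b v t ** mstar (D Q t)" for t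
  have "((\<lambda>t. f1 t - f2 t) has_integral 0) {0<..<1}"
    unfolding f1_def f2_def hD[OF dP dP1] hD[OF dQ dQ1] using sym_core[OF dP dP1 dQ dQ1] by simp
  then have i: "(\<lambda>t. f1 t - f2 t) integrable_on {0<..<1}" "integral {0<..<1} (\<lambda>t. f1 t - f2 t) = 0"
    by (auto simp: integral_unique)
  have "integral {0<..<1} f1 = integral {0<..<1} f2"
  proof (cases "f1 integrable_on {0<..<1}")
    case True
    have "(\<lambda>t. f1 t - (f1 t - f2 t)) integrable_on {0<..<1}" by (rule integrable_diff[OF True i(1)])
    moreover have "(\<lambda>t. f1 t - (f1 t - f2 t)) = f2" by auto
    ultimately have f2i: "f2 integrable_on {0<..<1}" by simp
    have "integral {0<..<1} f1 - integral {0<..<1} f2 = 0"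
      using integral_diff[OF True f2i] i by simp
    then show ?thesis by simp
  next
    case False
    have "\<not> f2 integrable_on {0<..<1}"
    proof
      assume "f2 integrable_on {0<..<1}"
      then have "(\<lambda>t. f2 t + (f1 t - f2 t)) integrable_on {0<..<1}" by (rule integrable_add[OF _ i(1)])
      moreover have "(\<lambda>t. f2 t + (f1 t - f2 t)) = f1" by auto
      ultimately show False using False by simp
    qed
    then show ?thesis using False by (simp add: not_integrable_integral)
  qed
  then show "mip (Wabv a b v) (D P) Q = mip (Wabv a b v) P (D Q)"
    unfolding mip_def f1_def f2_def .
qed

end


theorem proposition5p2:
  fixes k :: nat and \<alpha> \<beta> v :: real
  assumes "\<alpha> > - (real k + 1)" and "\<beta> > - (real k + 1)"
    and "\<bar>\<alpha> - \<beta>\<bar> < \<bar>v\<bar>" and "\<bar>v\<bar> < \<alpha> + \<beta> + 2 * (real k + 1)"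
  shows "weight_matrix (Wk \<alpha> \<beta> v k) \<and> irreducible_weight (Wk \<alpha> \<beta> v k)
         \<and> symmetric_op (Dk \<alpha> \<beta> v k) (Wk \<alpha> \<beta> v k)"
proof -
  define a where "a = \<alpha> + real k"
  define b where "b = \<beta> + real k"
  have pa: "parms a b v" unfolding parms_def a_def b_def using assms by auto
  interpret parms a b v by (rule pa)
  have W: "Wk \<alpha> \<beta> v k = Wabv a b v" by (rule ext) (simp add: Wk_def a_def b_def)
  have C: "Ck \<alpha> \<beta> v k = Cmat a b v"
    by (simp add: mat22_eq_iff Ck_def Cmat_def a_def b_def algebra_simps)
  have U: "Uk \<alpha> \<beta> k = (a+b+4) *\<^sub>R mat 1"
    by (simp add: Uk_def a_def b_def algebra_simps)
  have D: "Dk \<alpha> \<beta> v k P = (\<lambda>t. (t*(1-t)) *\<^sub>R P2 t + P1 t ** Fm t - P t ** Vc)"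
    if dP: "\<And>t. (P has_vector_derivative P1 t) (at t)" and dP1: "\<And>t. (P1 has_vector_derivative P2 t) (at t)"
    for P P1 P2 :: "real \<Rightarrow> cm"
  proof -
    have e1: "(\<lambda>s. vector_derivative P (at s)) = P1" by (rule ext) (rule vector_derivative_at[OF dP])
    have e2: "vector_derivative P1 (at s) = P2 s" for s by (rule vector_derivative_at[OF dP1])
    show ?thesis unfolding Dk_def e1 e2 Let_def by (simp add: C U Fm_def Vc_def)
  qed
  show ?thesis unfolding W
    using weight_matrix_W[OF pa] irreducible_W[OF pa] symmetric[OF D] by blast
qed

end
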